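(* Let $f$, $\mathcal{X}$, $D_0$, $f^*$, $\epsilon$, $R_\epsilon$, $M$ and DFDS be as in the context. Let $x^*\in\mathcal{X}$ be a global minimizer of $f$ over $\mathcal{X}$ and let $x_k\in\mathcal{X}_{R_\epsilon}$ with $x_k\notin\mathcal{X}^*_{R_\epsilon}$ (so that $\|x^*-x_k\|>R_\epsilon$). Define $\alpha=\arcsin\frac{\sqrt{3}R_\epsilon}{2\|x^*-x_k\|}$ and $\mathcal{S}^{N-1}_\alpha=\{d\in\mathcal{S}^{N-1}: \angle(x^*-x_k,d)\le\alpha\}$, where $\angle(u,v)\in[0,\pi]$ denotes the angle between vectors $u,v$. Then: 1. $\frac{\sqrt{3}R_\epsilon}{2(D_0+R_\epsilon)}\le\sin\alpha<\frac{\sqrt{3}}{2}$, equivalently $\arcsin\!\big(\frac{\sqrt{3}R_\epsilon}{2(D_0+R_\epsilon)}\big)\le\alpha<\frac{\pi}{3}$. 2. For every $d\in\mathcal{S}^{N-1}_\alpha$, the ray $\{x_k+td: t\ge 0\}$ intersects $\overline{\mathcal{B}}(x^*,R_\epsilon)$ in a segment (chord) of length at least $R_\epsilon$. 3. If $x_k$ is the current iteration point of DFDS and some direction $d_m$ generated at $x_k$ lies in $\mathcal{S}^{N-1}_\alpha$, then the directional search at $x_k$ finds, with certainty, a point $y$ with $f(y)\le f(x_k)-\epsilon/3$.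
   Context: $f$ is continuous and real-valued; $\mathcal{X}\subset\mathbb{R}^N$ is compact and convex with diameter $D_0$; $f^*=\min_{x\in\mathcal{X}}f(x)$. For $R>0$, $\mathcal{X}_R=\{x\in\mathbb{R}^N:\min_{s\in\mathcal{X}}\|x-s\|\le R\}$; $\overline{\mathcal{B}}(x,R)$ is the closed Euclidean ball; $\mathcal{S}^{N-1}$ is the unit sphere. Standing assumption: for the given $\epsilon>0$, $R_\epsilon>0$ is such that $f$ is well-defined on $\mathcal{X}_{R_\epsilon}$ and for every $x\in\mathcal{X}_{R_\epsilon}$ with $f(x)\le f^*+\epsilon$ one has $f(y)\le f(x)+\epsilon/3$ for all $y\in\overline{\mathcal{B}}(x,R_\epsilon)\cap\mathcal{X}_{R_\epsilon}$. $\mathcal{X}^*_{R_\epsilon}=\{x\in\mathcal{X}_{R_\epsilon}: f(x)\le f^*+\frac{2\epsilon}{3}\}$. DFDS (inputs $R_\epsilon$, integer $M\ge1$, $\epsilon$): Step 0: choose $x_0\in\mathcal{X}$, set $k=0$, $m=0$. Step 1: if $m\ge M$ go to Step 3; otherwise draw $d_m$ uniformly on $\mathcal{S}^{N-1}$ and set $r=R_\epsilon$. Step 2: if $x_k+rd_m\notin\mathcal{X}_{R_\epsilon}$, set $m=m+1$ and go to Step 1; else if $f(x_k+rd_m)\le f(x_k)-\epsilon/3$, set $x_{k+1}=x_k+rd_m$, $k=k+1$, $m=0$ and go to Step 1; otherwise set $r=r+R_\epsilon$ and repeat Step 2. Step 3: output any point of $\mathcal{X}\cap\overline{\mathcal{B}}(x_k,R_\epsilon)$.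 The points $x_k$ are the iteration points; the "directional search at $x_k$" is the line search of Step 2 along directions drawn while the current iteration point is $x_k$. *)

theory Defs
  imports "HOL-Analysis.Analysis"
begin

definition enlarge :: "'a::euclidean_space set \<Rightarrow> real \<Rightarrow> 'a set" where
  "enlarge X R = {x. infdist x X \<le> R}"

definition vangle :: "'a::euclidean_space \<Rightarrow> 'a \<Rightarrow> real" where
  "vangle u v = (if u = 0 \<or> v = 0 then pi / 2
                 else arccos (inner u v / (norm u * norm v)))"

text \<open>Outcome of the directional search (Step 2 of DFDS) at iteration point x along
  direction d with step R: trial points x + j R d, j = 1,2,...; the search stops with
  failure at the first trial point outside X_R, and with success (a new iterate y
  with f y <= f x - eps/3) at the first trial point inside X_R with sufficient decrease.\<close>
definition dir_search_succeeds ::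
  "('a::euclidean_space \<Rightarrow> real) \<Rightarrow> 'a set \<Rightarrow> real \<Rightarrow> real \<Rightarrow> 'a \<Rightarrow> 'a \<Rightarrow> bool" where
  "dir_search_succeeds f X R eps x d \<longleftrightarrow>
     (\<exists>j::nat. 1 \<le> j \<and> (\<forall>i\<in>{1..j}. x + (real i * R) *\<^sub>R d \<in> enlarge X R)
        \<and> f (x + (real j * R) *\<^sub>R d) \<le> f x - eps / 3)"

end

theory Submission
  imports Defs
begin

lemma infdist_attained:
  fixes X :: "'a::euclidean_space set"
  assumes "compact X" "X \<noteq> {}"
  shows "\<exists>s\<in>X. infdist x X = dist x s"
proof -
  obtain s where s: "s \<in> X" "\<And>y. y \<in> X \<Longrightarrow> dist x s \<le> dist x y"
    using distance_attains_inf[of X x] assms compact_imp_closed by blast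
  have "infdist x X \<ge> dist x s"
    unfolding infdist_notempty[OF assms(2)]
    by (rule cINF_greatest) (use assms(2) s in auto)
  with infdist_le[OF s(1), of x] s(1) show ?thesis by (intro bexI[of _ s]) auto
qed

lemma enlarge_convex_pt:
  fixes X :: "'a::euclidean_space set"
  assumes "compact X" "convex X" "x \<in> enlarge X R" "xs \<in> X" "dist y xs \<le> R"
    and "0 \<le> l" "l \<le> 1"
  shows "(1 - l) *\<^sub>R x + l *\<^sub>R y \<in> enlarge X R"
proof -
  obtain s where s: "s \<in> X" "infdist x X = dist x s"
    using infdist_attained[OF assms(1)] assms(4) by blast
  have ds: "dist x s \<le> R" using assms(3) s unfolding enlarge_def by simp
  have m: "(1 - l) *\<^sub>R s + l *\<^sub>R xs \<in> X"
    using assms(2) s(1) assms(4) assms(6,7) unfolding convex_def by auto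
  have "dist ((1 - l) *\<^sub>R x + l *\<^sub>R y) ((1 - l) *\<^sub>R s + l *\<^sub>R xs)
        = norm ((1 - l) *\<^sub>R (x - s) + l *\<^sub>R (y - xs))"
    by (simp add: dist_norm algebra_simps)
  also have "\<dots> \<le> (1 - l) * norm (x - s) + l * norm (y - xs)"
    using norm_triangle_ineq[of "(1 - l) *\<^sub>R (x - s)" "l *\<^sub>R (y - xs)"] assms(6,7)
    by simp
  also have "\<dots> \<le> (1 - l) * R + l * R"
    using ds assms(5,6,7) by (intro add_mono mult_left_mono) (auto simp: dist_norm)
  finally have "dist ((1 - l) *\<^sub>R x + l *\<^sub>R y) ((1 - l) *\<^sub>R s + l *\<^sub>R xs) \<le> R"
    by (simp add: algebra_simps)
  then show ?thesis unfolding enlarge_def using infdist_le2[OF m] by auto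
qed


lemma dist_line_sq:
  fixes u d :: "'a::euclidean_space"
  assumes "norm d = 1"
  shows "(norm (u - t *\<^sub>R d))\<^sup>2 = (norm u)\<^sup>2 - 2 * t * inner u d + t\<^sup>2"
proof -
  have "(norm (u - t *\<^sub>R d))\<^sup>2 = inner (u - t *\<^sub>R d) (u - t *\<^sub>R d)"
    by (simp add: power2_norm_eq_inner)
  also have "\<dots> = inner u u - 2 * t * inner u d + t\<^sup>2 * inner d d"
    by (simp add: inner_diff_left inner_diff_right inner_commute power2_eq_square algebra_simps)
  also have "inner d d = 1" using assms by (metis norm_eq_1)
  finally show ?thesis by (simp add: power2_norm_eq_inner)
qed

theorem lemma3:
  fixes f :: "'a::euclidean_space \<Rightarrow> real"
    and X :: "'a set" and eps R :: real and xstar xk :: 'a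
  assumes "compact X" and "convex X"
    and "eps > 0" and "R > 0"
    and "continuous_on (enlarge X R) f"
    and "xstar \<in> X" and "\<forall>x\<in>X. f xstar \<le> f x"
    and "\<forall>x\<in>enlarge X R. f x \<le> f xstar + eps \<longrightarrow>
           (\<forall>y\<in>cball x R \<inter> enlarge X R. f y \<le> f x + eps / 3)"
    and "xk \<in> enlarge X R"
    and "\<not> (f xk \<le> f xstar + 2 * eps / 3)"
  shows "let \<alpha> = arcsin (sqrt 3 * R / (2 * norm (xstar - xk)));
             S\<alpha> = {d. norm d = 1 \<and> vangle (xstar - xk) d \<le> \<alpha>}
         in (sqrt 3 * R / (2 * (diameter X + R)) \<le> sin \<alpha> \<and> sin \<alpha> < sqrt 3 / 2
             \<and> arcsin (sqrt 3 * R / (2 * (diameter X + R))) \<le> \<alpha> \<and> \<alpha> < pi / 3)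
          \<and> (\<forall>d\<in>S\<alpha>. \<exists>p q. {xk + t *\<^sub>R d | t. t \<ge> 0} \<inter> cball xstar R = closed_segment p q
                              \<and> dist p q \<ge> R)
          \<and> (\<forall>d\<in>S\<alpha>. dir_search_succeeds f X R eps xk d)"
proof -
  define u where "u = xstar - xk"
  define \<rho> where "\<rho> = norm u"
  define D where "D = diameter X"
  define c where "c = sqrt 3 * R / (2 * \<rho>)"
  define c0 where "c0 = sqrt 3 * R / (2 * (D + R))"
  have Xne: "X \<noteq> {}" using assms(6) by blast
  have xs_en: "xstar \<in> enlarge X R" using assms(6,4) by (simp add: enlarge_def)
  have ball_en: "y \<in> enlarge X R" if "dist xstar y \<le> R" for y
    using infdist_le2[OF assms(6), of y R] that by (simp add: enlarge_def dist_commute)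
  have fy: "f y \<le> f xstar + eps / 3" if "dist xstar y \<le> R" for y
    using assms(8) xs_en ball_en[OF that] that assms(3) by auto
  have rhoR: "\<rho> > R"
  proof (rule ccontr)
    assume "\<not> \<rho> > R"
    then have "dist xstar xk \<le> R" by (simp add: \<rho>_def u_def dist_norm)
    from fy[OF this] assms(10,3) show False by simp
  qed
  have rhoD: "\<rho> \<le> D + R"
  proof -
    obtain s where s: "s \<in> X" "infdist xk X = dist xk s"
      using infdist_attained[OF assms(1) Xne] by blast
    have "dist xk s \<le> R" using s assms(9) by (simp add: enlarge_def)
    moreover have "dist xstar s \<le> D" unfolding D_def
      using diameter_bounded_bound[OF compact_imp_bounded[OF assms(1)] assms(6) s(1)] .
    ultimately show ?thesis using dist_triangle[of xstar xk s]
      by (simp add: \<rho>_def u_def dist_norm norm_minus_commute dist_commute)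
  qed
  have s3: "sqrt 3 < 2"
    by (rule real_less_lsqrt) auto
  have s3p: "sqrt 3 > 0" by simp
  have c0pos: "0 < c0" unfolding c0_def using rhoD rhoR assms(4) by (auto intro!: divide_pos_pos)
  have c0c: "c0 \<le> c" unfolding c0_def c_def using rhoD rhoR assms(4) s3p
    by (intro divide_left_mono mult_left_mono) auto
  have cpos: "c > 0" unfolding c_def using rhoR assms(4) by auto
  have clt: "c < sqrt 3 / 2" unfolding c_def using rhoR assms(4) s3p
    by (simp add: field_simps)
  have c1: "c < 1" using clt s3 by simp
  have sinc: "sin (arcsin c) = c" using cpos c1 by (intro sin_arcsin) auto
  have pi3: "arcsin (sqrt 3 / 2) = pi / 3" using arcsin_sin[of "pi/3"] by (simp add: sin_60)
  have part1: "c0 \<le> sin (arcsin c) \<and> sin (arcsin c) < sqrt 3 / 2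
             \<and> arcsin c0 \<le> arcsin c \<and> arcsin c < pi / 3"
    using sinc c0c clt c0pos c1 s3 pi3 arcsin_le_arcsin[of c0 c] arcsin_less_arcsin[of c "sqrt 3 / 2"]
    by auto
  have main: "(\<exists>p q. {xk + t *\<^sub>R d | t. t \<ge> 0} \<inter> cball xstar R = closed_segment p q
                              \<and> dist p q \<ge> R) \<and> dir_search_succeeds f X R eps xk d"
    if d1: "norm d = 1" and ang: "vangle u d \<le> arcsin c" for d
  proof -
    define a where "a = inner u d"
    have u0: "u \<noteq> 0" using rhoR assms(4) by (auto simp: \<rho>_def)
    have d0: "d \<noteq> 0" using d1 by auto
    have rpos: "\<rho> > 0" using rhoR assms(4) by simp
    have cs: "\<bar>a\<bar> \<le> \<rho>" using Cauchy_Schwarz_ineq2[of u d] d1 by (simp add: a_def \<rho>_def)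
    have ab: "\<bar>a / \<rho>\<bar> \<le> 1" using cs rpos by (simp add: abs_divide)
    have va: "vangle u d = arccos (a / \<rho>)"
      using u0 d0 d1 by (simp add: vangle_def a_def \<rho>_def)
    have asn: "0 \<le> arcsin c" "arcsin c \<le> pi / 2"
      using cpos c1 arcsin_nonneg[of c] arcsin_bounded[of c] by auto
    have ab2: "- 1 \<le> a / \<rho>" "a / \<rho> \<le> 1" using cs rpos by (simp_all add: abs_le_iff le_divide_eq divide_le_eq)
    have "cos (arcsin c) \<le> cos (arccos (a / \<rho>))"
      using ang va asn arccos_lbound[OF ab2] arccos_ubound[OF ab2]
      by (subst cos_mono_le_eq) auto
    then have "sqrt (1 - c\<^sup>2) \<le> a / \<rho>"
      using cos_arcsin[of c] cpos c1 ab by (simp add: abs_le_iff)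
    then have ar: "\<rho> * sqrt (1 - c\<^sup>2) \<le> a" using rpos by (simp add: field_simps)
    have c2: "c\<^sup>2 < 1" using cpos c1 by (simp add: power_less_one_iff)
    have apos: "a > 0"
      using ar rpos c2 by (smt (verit) mult_pos_pos real_sqrt_gt_zero)
    have "(\<rho> * sqrt (1 - c\<^sup>2))\<^sup>2 \<le> a\<^sup>2"
      using ar apos rpos c2 by (intro power_mono) auto
    then have "\<rho>\<^sup>2 * (1 - c\<^sup>2) \<le> a\<^sup>2" using c2 by (simp add: power_mult_distrib)
    moreover have "\<rho>\<^sup>2 * c\<^sup>2 = 3 * R\<^sup>2 / 4"
      unfolding c_def using rpos by (simp add: power_divide power_mult_distrib field_simps)
    ultimately have a2: "a\<^sup>2 \<ge> \<rho>\<^sup>2 - 3 * R\<^sup>2 / 4" by (simp add: algebra_simps)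
    define s where "s = sqrt (a\<^sup>2 - \<rho>\<^sup>2 + R\<^sup>2)"
    have sR: "s \<ge> R / 2"
    proof -
      have "sqrt ((R/2)\<^sup>2) \<le> s" unfolding s_def using a2
        by (intro real_sqrt_le_mono) (simp add: power_divide)
      then show ?thesis using assms(4) by simp
    qed
    have s2: "s\<^sup>2 = a\<^sup>2 - \<rho>\<^sup>2 + R\<^sup>2" unfolding s_def using a2 assms(4)
      by (intro real_sqrt_pow2) (use zero_le_power2[of R] in linarith)
    have sa: "s < a"
    proof -
      have "R\<^sup>2 < \<rho>\<^sup>2" using rhoR assms(4) by (simp add: power_strict_mono)
      then show ?thesis unfolding s_def using apos a2 zero_le_power2[of R]
        by (intro real_less_lsqrt) auto
    qed
    define t1 where "t1 = a - s"
    define t2 where "t2 = a + s"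
    have t1pos: "t1 > 0" using sa by (simp add: t1_def)
    have key: "dist xstar (xk + t *\<^sub>R d) \<le> R \<longleftrightarrow> t1 \<le> t \<and> t \<le> t2" for t
    proof -
      have e: "xstar - (xk + t *\<^sub>R d) = u - t *\<^sub>R d" by (simp add: u_def)
      have "dist xstar (xk + t *\<^sub>R d) \<le> R \<longleftrightarrow> (norm (u - t *\<^sub>R d))\<^sup>2 \<le> R\<^sup>2"
      proof -
        have "dist xstar (xk + t *\<^sub>R d) = norm (u - t *\<^sub>R d)" by (simp only: dist_norm e)
        moreover have "norm (u - t *\<^sub>R d) \<le> R \<longleftrightarrow> (norm (u - t *\<^sub>R d))\<^sup>2 \<le> R\<^sup>2"
          using abs_le_square_iff[of "norm (u - t *\<^sub>R d)" R] assms(4) by simp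
        ultimately show ?thesis by simp
      qed
      also have "\<dots> \<longleftrightarrow> (t - a)\<^sup>2 \<le> s\<^sup>2"
        unfolding dist_line_sq[OF d1] s2 by (simp add: \<rho>_def a_def power2_diff algebra_simps)
      also have "\<dots> \<longleftrightarrow> \<bar>t - a\<bar> \<le> s"
        using sR assms(4) by (simp add: abs_le_square_iff[symmetric])
      finally show ?thesis by (auto simp: t1_def t2_def abs_le_iff)
    qed
    have P1: "\<exists>p q. {xk + t *\<^sub>R d | t. t \<ge> 0} \<inter> cball xstar R = closed_segment p q
                              \<and> dist p q \<ge> R"
    proof (intro exI conjI)
      show "{xk + t *\<^sub>R d | t. t \<ge> 0} \<inter> cball xstar R
            = closed_segment (xk + t1 *\<^sub>R d) (xk + t2 *\<^sub>R d)"
      proof (rule set_eqI)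
        fix x
        show "x \<in> {xk + t *\<^sub>R d | t. t \<ge> 0} \<inter> cball xstar R \<longleftrightarrow>
              x \<in> closed_segment (xk + t1 *\<^sub>R d) (xk + t2 *\<^sub>R d)"
        proof
          assume "x \<in> {xk + t *\<^sub>R d | t. t \<ge> 0} \<inter> cball xstar R"
          then obtain t where t: "x = xk + t *\<^sub>R d" "t \<ge> 0" "dist xstar x \<le> R" by auto
          have tt: "t1 \<le> t" "t \<le> t2" using key[of t] t by auto
          have sp: "t2 - t1 > 0" using sR assms(4) by (simp add: t1_def t2_def)
          define m where "m = (t - t1) / (t2 - t1)"
          have m01: "0 \<le> m" "m \<le> 1" using tt sp by (auto simp: m_def field_simps)
          have mm0: "m * (t2 - t1) = t - t1" using sp by (simp add: m_def)
          have mm: "m * t2 - m * t1 = t - t1" using mm0 by (simp add: right_diff_distrib)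
          have "t = (1 - m) * t1 + m * t2" using mm by (simp add: left_diff_distrib; linarith)
          then have "x = (1 - m) *\<^sub>R (xk + t1 *\<^sub>R d) + m *\<^sub>R (xk + t2 *\<^sub>R d)"
            using t(1) by (simp add: algebra_simps scaleR_add_left[symmetric] del: scaleR_add_left)
          then show "x \<in> closed_segment (xk + t1 *\<^sub>R d) (xk + t2 *\<^sub>R d)"
            using m01 by (auto simp: in_segment)
        next
          assume "x \<in> closed_segment (xk + t1 *\<^sub>R d) (xk + t2 *\<^sub>R d)"
          then obtain m where m: "0 \<le> m" "m \<le> 1"
            "x = (1 - m) *\<^sub>R (xk + t1 *\<^sub>R d) + m *\<^sub>R (xk + t2 *\<^sub>R d)"
            by (auto simp: in_segment)
          define t where "t = (1 - m) * t1 + m * t2"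
          have x: "x = xk + t *\<^sub>R d" using m(3)
            by (simp add: t_def algebra_simps)
          have "t1 \<le> t" "t \<le> t2" using m t1pos sR assms(4)
            unfolding t_def t1_def t2_def by (auto simp: algebra_simps intro!: mult_left_mono)
          then show "x \<in> {xk + t *\<^sub>R d | t. t \<ge> 0} \<inter> cball xstar R"
            using key[of t] x t1pos by auto
        qed
      qed
      show "R \<le> dist (xk + t1 *\<^sub>R d) (xk + t2 *\<^sub>R d)"
      proof -
        have "dist (xk + t1 *\<^sub>R d) (xk + t2 *\<^sub>R d) = norm ((t1 - t2) *\<^sub>R d)"
          by (simp add: dist_norm scaleR_diff_left)
        also have "\<dots> = \<bar>t1 - t2\<bar>" using d1 by simp
        also have "\<dots> = 2 * s" using sR assms(4) by (simp add: t1_def t2_def)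
        finally show ?thesis using sR by simp
      qed
    qed
    define j where "j = nat \<lceil>t1 / R\<rceil>"
    have q: "t1 / R > 0" using t1pos assms(4) by simp
    have cq: "0 < \<lceil>t1 / R\<rceil>" using q by linarith
    have jr: "real j = of_int \<lceil>t1 / R\<rceil>" using cq by (simp add: j_def)
    have j1: "1 \<le> j" using cq unfolding j_def by arith
    have jR1: "t1 \<le> real j * R"
    proof -
      have "t1 / R \<le> real j" using jr le_of_int_ceiling[of "t1 / R"] by simp
      then show ?thesis using assms(4) by (simp add: pos_divide_le_eq)
    qed
    have jR2: "real j * R \<le> t2"
    proof -
      have "real j \<le> t1 / R + 1" using jr of_int_ceiling_le_add_one[of "t1 / R"] by simp
      then have "real j * R \<le> (t1 / R + 1) * R" using assms(4) by (simp add: mult_right_mono)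
      also have "\<dots> = t1 + R" using assms(4) by (simp add: distrib_right)
      finally show ?thesis using sR by (simp add: t1_def t2_def)
    qed
    define y where "y = xk + (real j * R) *\<^sub>R d"
    have yd: "dist xstar y \<le> R" using key jR1 jR2 by (simp add: y_def)
    have fy2: "f y \<le> f xk - eps / 3" using fy[OF yd] assms(10) by simp
    have inen: "xk + (real i * R) *\<^sub>R d \<in> enlarge X R" if "i \<in> {1..j}" for i
    proof -
      define l where "l = real i / real j"
      have l: "0 \<le> l" "l \<le> 1" using that j1 by (auto simp: l_def)
      have "xk + (real i * R) *\<^sub>R d = (1 - l) *\<^sub>R xk + l *\<^sub>R y"
        using j1 by (simp add: y_def l_def algebra_simps)
      also have "\<dots> \<in> enlarge X R"
        by (rule enlarge_convex_pt[OF assms(1,2,9,6) _ l]) (use yd in \<open>simp add: dist_commute\<close>)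
      finally show ?thesis .
    qed
    have "dir_search_succeeds f X R eps xk d"
      unfolding dir_search_succeeds_def using j1 inen fy2 by (auto simp: y_def)
    with P1 show ?thesis by blast
  qed
  show ?thesis
    unfolding Let_def u_def[symmetric] \<rho>_def[symmetric] c_def[symmetric] D_def[symmetric]
      c0_def[symmetric]
    using part1 main by blast
qed

end
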